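(* Let $C=\mathbb{S}^1\times\mathbb{R}$ be the flat Euclidean cylinder, $\theta_0\in\mathbb{S}^1$, $v=\{\theta_0\}\times\mathbb{R}$, and let $f:C\to C$ be a geodesic-preserving bijection with $f(v)=v$, $f(\theta_0,0)=(\theta_0,0)$ and $f(\theta_0,1)=(\theta_0,1)$. Then $f(\theta_0,n/2^m)=(\theta_0,n/2^m)$ for all integers $n$ and $m\geq 0$.
   Context: $C$ carries the product of the flat metric on $\mathbb{S}^1=\mathbb{R}/\mathbb{Z}$ and the standard metric on $\mathbb{R}$. A geodesic is the image of a locally isometric immersion of the whole real line; a bijection (not assumed continuous) is geodesic-preserving if it maps every geodesic onto a geodesic as a set. *)

theory Defs
  imports "HOL-Analysis.Analysis"
begin

text \<open>The flat cylinder C = S^1 x R with S^1 = R/Z, modelled on the fundamental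
domain [0,1) x R.  A point (x,y) with 0 <= x < 1 represents the class of x in R/Z
together with the height y.\<close>

definition cyl :: "(real \<times> real) set" where
  "cyl = {p. 0 \<le> fst p \<and> fst p < 1}"

definition circ_dist :: "real \<Rightarrow> real \<Rightarrow> real" where
  "circ_dist a b = min (frac (a - b)) (1 - frac (a - b))"

definition cyl_dist :: "real \<times> real \<Rightarrow> real \<times> real \<Rightarrow> real" where
  "cyl_dist p q = sqrt ((circ_dist (fst p) (fst q))\<^sup>2 + (snd p - snd q)\<^sup>2)"

definition loc_isom_immersion :: "(real \<Rightarrow> real \<times> real) \<Rightarrow> bool" where
  "loc_isom_immersion \<gamma> \<longleftrightarrow> range \<gamma> \<subseteq> cyl \<and>
     (\<forall>t. \<exists>e>0. \<forall>s\<in>{t-e<..<t+e}. \<forall>s'\<in>{t-e<..<t+e}.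
         cyl_dist (\<gamma> s) (\<gamma> s') = \<bar>s - s'\<bar>)"

definition cyl_geodesic :: "(real \<times> real) set \<Rightarrow> bool" where
  "cyl_geodesic G \<longleftrightarrow> (\<exists>\<gamma>. loc_isom_immersion \<gamma> \<and> G = range \<gamma>)"

definition geodesic_preserving :: "(real \<times> real \<Rightarrow> real \<times> real) \<Rightarrow> bool" where
  "geodesic_preserving f \<longleftrightarrow>
     bij_betw f cyl cyl \<and> (\<forall>G. cyl_geodesic G \<longrightarrow> cyl_geodesic (f ` G))"

end

theory Submission
  imports Defs
begin

lemma circ_dist_le: "circ_dist a b \<le> \<bar>a - b - of_int k\<bar>"
proof -
  define z where "z = a - b"
  have f: "frac z = z - of_int \<lfloor>z\<rfloor>" by (simp add: frac_def)
  have fl: "of_int \<lfloor>z\<rfloor> \<le> z" "z < of_int \<lfloor>z\<rfloor> + 1" by linarith+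
  show ?thesis
  proof (cases "k \<le> \<lfloor>z\<rfloor>")
    case True
    then have "of_int k \<le> (of_int \<lfloor>z\<rfloor>::real)" by simp
    then show ?thesis unfolding circ_dist_def z_def[symmetric] using f fl by linarith
  next
    case False
    then have "of_int k \<ge> (of_int \<lfloor>z\<rfloor>::real) + 1" by simp
    then show ?thesis unfolding circ_dist_def z_def[symmetric] using f fl by linarith
  qed
qed

lemma circ_dist_ex: "\<exists>k::int. circ_dist a b = \<bar>a - b - of_int k\<bar>"
proof -
  define z where "z = a - b"
  have f: "frac z = z - of_int \<lfloor>z\<rfloor>" by (simp add: frac_def)
  have fl: "of_int \<lfloor>z\<rfloor> \<le> z" "z < of_int \<lfloor>z\<rfloor> + 1" by linarith+
  show ?thesis
  proof (cases "frac z \<le> 1 - frac z")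
    case True
    then have "circ_dist a b = \<bar>a - b - of_int \<lfloor>z\<rfloor>\<bar>"
      unfolding circ_dist_def z_def[symmetric] using f fl by (simp add: z_def)
    then show ?thesis by blast
  next
    case False
    then have "circ_dist a b = \<bar>a - b - of_int (\<lfloor>z\<rfloor> + 1)\<bar>"
      unfolding circ_dist_def z_def[symmetric] using f fl by (simp add: z_def)
    then show ?thesis by blast
  qed
qed

lemma circ_dist_nonneg: "circ_dist a b \<ge> 0"
  unfolding circ_dist_def using frac_ge_0[of "a-b"] frac_lt_1[of "a-b"] by simp

lemma circ_dist_eq:
  assumes "\<bar>a - b - of_int k\<bar> \<le> 1/2"
  shows "circ_dist a b = \<bar>a - b - of_int k\<bar>"
proof -
  obtain k' where k': "circ_dist a b = \<bar>a - b - of_int k'\<bar>" using circ_dist_ex by blast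
  show ?thesis
  proof (cases "k' = k")
    case False
    then have "\<bar>of_int k - of_int k'\<bar> \<ge> (1::real)"
      by (metis of_int_1_le_iff of_int_abs of_int_diff zero_less_abs_iff right_minus_eq int_one_le_iff_zero_less)
    then have "circ_dist a b \<ge> 1/2" using k' assms by linarith
    then show ?thesis using circ_dist_le[of a b k] assms by linarith
  qed (use k' in simp)
qed

lemma frac_eq_iff_Ints: "frac x = frac y \<longleftrightarrow> x - y \<in> \<int>"
proof
  assume "frac x = frac y"
  then have "x - y = of_int (\<lfloor>x\<rfloor> - \<lfloor>y\<rfloor>)" by (simp add: frac_def)
  then show "x - y \<in> \<int>" by simp
next
  assume "x - y \<in> \<int>"
  then obtain n where "x = y + of_int n" by (metis Ints_cases add_diff_cancel_left' add.commute diff_add_cancel)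
  then show "frac x = frac y" by simp
qed

lemma frac_eq_theta: "0 \<le> \<theta> \<Longrightarrow> \<theta> < 1 \<Longrightarrow> frac z = \<theta> \<longleftrightarrow> z - \<theta> \<in> \<int>"
  using frac_eq_iff_Ints[of z \<theta>] frac_eq[of \<theta>] by simp

definition AP :: "real \<Rightarrow> real \<Rightarrow> real set" where "AP b r = range (\<lambda>k::int. b + of_int k * r)"

lemma AP_iff: "x \<in> AP b r \<longleftrightarrow> (\<exists>k::int. x = b + of_int k * r)" by (auto simp: AP_def)

lemma AP_sub:
  assumes "b + of_int j * r \<in> AP b2 r2" "b + of_int (j+1) * r \<in> AP b2 r2"
  shows "AP b r \<subseteq> AP b2 r2"
proof
  obtain k1 where k1: "b + of_int j * r = b2 + of_int k1 * r2" using assms(1) by (auto simp: AP_iff)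
  obtain k2 where k2: "b + of_int (j+1) * r = b2 + of_int k2 * r2" using assms(2) by (auto simp: AP_iff)
  have r: "r = of_int (k2 - k1) * r2" using k1 k2 by (simp add: algebra_simps)
  fix x assume "x \<in> AP b r"
  then obtain i where "x = b + of_int i * r" by (auto simp: AP_iff)
  then have "x = (b + of_int j * r) + of_int (i - j) * r" by (simp add: algebra_simps)
  also have "\<dots> = b2 + of_int k1 * r2 + of_int (i - j) * (of_int (k2 - k1) * r2)" using k1 r by simp
  also have "\<dots> = b2 + of_int (k1 + (i - j) * (k2 - k1)) * r2" by (simp add: algebra_simps)
  finally show "x \<in> AP b2 r2" unfolding AP_iff by blast
qed

lemma AP_affine:
  fixes g :: "real \<Rightarrow> real"
  assumes inj: "inj g" and apm: "\<And>b r. r \<noteq> 0 \<Longrightarrow> \<exists>b' r'. r' \<noteq> 0 \<and> g ` AP b r = AP b' r'"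
    and a: "a \<noteq> 0"
  shows "\<exists>C R. \<forall>k::int. g (of_int k * a) = C + of_int k * R"
proof -
  obtain b r where r: "r \<noteq> 0" and gA: "g ` AP 0 a = AP b r" using apm[OF a] by blast
  have "\<forall>j. \<exists>k::int. g (of_int k * a) = b + of_int j * r"
  proof
    fix j :: int
    have "b + of_int j * r \<in> g ` AP 0 a" unfolding gA by (auto simp: AP_iff)
    then show "\<exists>k::int. g (of_int k * a) = b + of_int j * r" by (auto simp: AP_iff)
  qed
  then obtain H where H: "\<And>j. g (of_int (H j) * a) = b + of_int j * r" by metis
  have Hinj: "i = j" if "H i = H j" for i j
  proof -
    have "b + of_int i * r = b + of_int j * r" using H[of i] H[of j] that by metis
    then have "real_of_int i = of_int j" using r by simp
    then show ?thesis by simp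
  qed
  have step: "H (j+1) - H j = 1 \<or> H (j+1) - H j = -1" for j
  proof -
    define \<delta> where "\<delta> = H (j+1) - H j"
    have d0: "\<delta> \<noteq> 0" using Hinj[of "j+1" j] by (auto simp: \<delta>_def)
    define M where "M = AP (of_int (H j) * a) (of_int \<delta> * a)"
    obtain b2 r2 where gM: "g ` M = AP b2 r2" using apm[of "of_int \<delta> * a" "of_int (H j) * a"] d0 a unfolding M_def by force
    have m1: "of_int (H j) * a \<in> M" unfolding M_def AP_iff by (rule exI[of _ 0]) simp
    have m2: "of_int (H (j+1)) * a \<in> M" unfolding M_def AP_iff
      by (rule exI[of _ 1]) (simp add: \<delta>_def algebra_simps)
    have "b + of_int j * r \<in> AP b2 r2" using m1 H[of j] gM by (metis imageI)
    moreover have "b + of_int (j+1) * r \<in> AP b2 r2" using m2 H[of "j+1"] gM by (metis imageI)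
    ultimately have "AP b r \<subseteq> AP b2 r2" by (rule AP_sub)
    then have "g ` AP 0 a \<subseteq> g ` M" using gA gM by simp
    then have sub: "AP 0 a \<subseteq> M" using inj by (simp add: inj_image_subset_iff)
    have "a \<in> AP 0 a" unfolding AP_iff by (rule exI[of _ 1]) simp
    then have "a \<in> M" using sub by blast
    then obtain k where k: "a = of_int (H j) * a + of_int k * (of_int \<delta> * a)" unfolding M_def AP_iff by blast
    have "0 \<in> AP 0 a" unfolding AP_iff by (rule exI[of _ 0]) simp
    then have "0 \<in> M" using sub by blast
    then obtain k' where k': "0 = of_int (H j) * a + of_int k' * (of_int \<delta> * a)" unfolding M_def AP_iff by blast
    have "a = of_int (\<delta> * (k - k')) * a" using k k' by (simp add: algebra_simps)
    then have "of_int (\<delta> * (k - k')) = (1::real)" using a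
      by (metis mult_cancel_right2)
    then have "\<delta> * (k - k') = 1" by linarith
    then show ?thesis unfolding \<delta>_def[symmetric] by (auto simp: zmult_eq_1_iff)
  qed
  define \<sigma> where "\<sigma> = H 1 - H 0"
  have same: "H (j+2) - H (j+1) = H (j+1) - H j" for j
  proof (rule ccontr)
    assume "\<not> ?thesis"
    then have "H (j+2) = H j" using step[of j] step[of "j+1"] by (auto simp: add.assoc)
    then show False using Hinj[of "j+2" j] by simp
  qed
  have cst: "H (j+1) - H j = \<sigma>" for j
  proof (induction j rule: int_induct[where k=0])
    case base then show ?case by (simp add: \<sigma>_def)
  next
    case (step1 i) then show ?case using same[of i] by (simp add: add.assoc)
  next
    case (step2 i) then show ?case using same[of "i-1"] by (simp add: algebra_simps)
  qed
  have lin: "H j = H 0 + \<sigma> * j" for j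
  proof (induction j rule: int_induct[where k=0])
    case base then show ?case by simp
  next
    case (step1 i) then show ?case using cst[of i] by (simp add: algebra_simps)
  next
    case (step2 i) then show ?case using cst[of "i-1"] by (simp add: algebra_simps)
  qed
  have s2: "\<sigma> * \<sigma> = 1" using step[of 0] by (auto simp: \<sigma>_def)
  show ?thesis
  proof (intro exI allI)
    fix k :: int
    have "of_int k * a \<in> AP 0 a" unfolding AP_iff by auto
    then have "g (of_int k * a) \<in> AP b r" unfolding gA[symmetric] by blast
    then obtain j where j: "g (of_int k * a) = b + of_int j * r" by (auto simp: AP_iff)
    then have "g (of_int k * a) = g (of_int (H j) * a)" using H[of j] by simp
    then have "of_int k * a = of_int (H j) * a" using inj by (simp add: inj_eq)
    then have "k = H j" using a by simp
    then have "k = H 0 + \<sigma> * j" using lin[of j] by metis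
    then have "\<sigma> * (k - H 0) = (\<sigma> * \<sigma>) * j" by (simp add: algebra_simps)
    then have jj: "j = \<sigma> * (k - H 0)" using s2 by simp
    have "g (of_int k * a) = b + of_int (\<sigma> * (k - H 0)) * r" using j jj by simp
    also have "\<dots> = (b - of_int (\<sigma> * H 0) * r) + of_int k * (of_int \<sigma> * r)"
      by (simp add: algebra_simps)
    finally show "g (of_int k * a) = (b - of_int (\<sigma> * H 0) * r) + of_int k * (of_int \<sigma> * r)" .
  qed
qed

lemma dyadic_fixed:
  fixes g :: "real \<Rightarrow> real"
  assumes inj: "inj g" and apm: "\<And>b r. r \<noteq> 0 \<Longrightarrow> \<exists>b' r'. r' \<noteq> 0 \<and> g ` AP b r = AP b' r'"
    and g0: "g 0 = 0" and g1: "g 1 = 1"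
  shows "g (of_int n / 2^m) = of_int n / 2^m"
proof -
  define a :: real where "a = 1 / 2^m"
  have a: "a \<noteq> 0" by (simp add: a_def)
  obtain C R where CR: "\<And>k::int. g (of_int k * a) = C + of_int k * R" using AP_affine[OF inj apm a] by blast
  have "C = 0" using CR[of 0] g0 by simp
  have "of_int (2^m) * a = 1" by (simp add: a_def)
  then have "1 = C + of_int (2^m) * R" using CR[of "2^m"] g1 by simp
  then have R: "R = a" using \<open>C = 0\<close> by (simp add: a_def field_simps)
  have "of_int n / 2^m = of_int n * a" by (simp add: a_def)
  then show ?thesis using CR[of n] \<open>C = 0\<close> R by simp
qed

lemma alg_collinear:
  fixes p q p1 q1 x h :: real
  assumes a1: "p^2 + q^2 = x^2" and a2: "p1^2 + q1^2 = h^2"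
    and a3: "(p - p1)^2 + (q - q1)^2 = (x - h)^2" and h: "h > 0"
  shows "p = x / h * p1 \<and> q = x / h * q1"
proof -
  have ip: "p*p1 + q*q1 = x*h" using a1 a2 a3 by (simp add: power2_eq_square algebra_simps)
  have "(p - x/h*p1)^2 + (q - x/h*q1)^2 = (p^2+q^2) - 2*(x/h)*(p*p1+q*q1) + (x/h)^2*(p1^2+q1^2)"
    using h by (simp add: power2_eq_square field_simps)
  also have "\<dots> = x^2 - 2*(x/h)*(x*h) + (x/h)^2*h^2" using a1 a2 ip by simp
  also have "\<dots> = 0" using h by (simp add: power2_eq_square field_simps)
  finally have "(p - x/h*p1)^2 + (q - x/h*q1)^2 = 0" .
  then show ?thesis by (simp add: sum_power2_eq_zero_iff)
qed

lemma local_straight: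
  assumes "loc_isom_immersion \<gamma>"
  shows "\<exists>e>0. e \<le> 1/8 \<and> (\<exists>c d. c^2 + d^2 = 1 \<and> (\<forall>s s'. \<bar>s - t\<bar> < e \<longrightarrow> \<bar>s' - t\<bar> < e \<longrightarrow>
     snd (\<gamma> s') - snd (\<gamma> s) = d * (s' - s) \<and> fst (\<gamma> s') - fst (\<gamma> s) - c * (s' - s) \<in> \<int>))"
proof -
  obtain e0 where e0: "e0 > 0" "\<forall>s\<in>{t-e0<..<t+e0}. \<forall>s'\<in>{t-e0<..<t+e0}. cyl_dist (\<gamma> s) (\<gamma> s') = \<bar>s - s'\<bar>"
    using assms unfolding loc_isom_immersion_def by blast
  define e where "e = min e0 (1/8)"
  have epos: "e > 0" "e \<le> 1/8" using e0 by (auto simp: e_def)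
  define X where "X s = fst (\<gamma> s)" for s
  define Y where "Y s = snd (\<gamma> s)" for s
  have dist: "(circ_dist (X s) (X s'))^2 + (Y s - Y s')^2 = (s - s')^2" if "\<bar>s - t\<bar> < e" "\<bar>s' - t\<bar> < e" for s s'
  proof -
    have "s \<in> {t-e0<..<t+e0}" "s' \<in> {t-e0<..<t+e0}" using that by (auto simp: e_def abs_less_iff)
    then have "cyl_dist (\<gamma> s) (\<gamma> s') = \<bar>s - s'\<bar>" using e0 by blast
    then have "sqrt ((circ_dist (X s) (X s'))^2 + (Y s - Y s')^2) = \<bar>s - s'\<bar>"
      by (simp add: cyl_dist_def X_def Y_def)
    then have "(sqrt ((circ_dist (X s) (X s'))^2 + (Y s - Y s')^2))^2 = \<bar>s - s'\<bar>^2" by simp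
    then show ?thesis by simp
  qed
  have cdle: "circ_dist (X s) (X s') \<le> \<bar>s - s'\<bar>" if "\<bar>s - t\<bar> < e" "\<bar>s' - t\<bar> < e" for s s'
  proof -
    have "0 \<le> (Y s - Y s')^2" by simp
    then have "(circ_dist (X s) (X s'))^2 \<le> (s - s')^2" using dist[OF that] by linarith
    then have "(circ_dist (X s) (X s'))^2 \<le> \<bar>s - s'\<bar>^2" by simp
    then show ?thesis using circ_dist_nonneg by (meson abs_ge_zero power2_le_imp_le)
  qed
  have "\<forall>s. \<exists>k::int. circ_dist (X s) (X t) = \<bar>X s - X t - of_int k\<bar>" using circ_dist_ex by blast
  then obtain K where K: "\<And>s. circ_dist (X s) (X t) = \<bar>X s - X t - of_int (K s)\<bar>" by metis
  define P where "P s = X s - X t - of_int (K s)" for s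
  have Pb: "\<bar>P s\<bar> \<le> \<bar>s - t\<bar>" if "\<bar>s - t\<bar> < e" for s
    using cdle[OF that, of t] K[of s] epos by (simp add: P_def)
  have Pt: "P t = 0" using Pb[of t] epos by simp
  have pair: "(P s' - P s)^2 + (Y s' - Y s)^2 = (s' - s)^2" if "\<bar>s - t\<bar> < e" "\<bar>s' - t\<bar> < e" for s s'
  proof -
    have "X s' - X s - of_int (K s' - K s) = P s' - P s" by (simp add: P_def)
    moreover have "\<bar>P s' - P s\<bar> \<le> 1/2" using Pb[OF that(1)] Pb[OF that(2)] that epos by linarith
    ultimately have "circ_dist (X s') (X s) = \<bar>P s' - P s\<bar>" using circ_dist_eq[of "X s'" "X s" "K s' - K s"] by simp
    then show ?thesis using dist[OF that(2) that(1)] by simp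
  qed
  define h where "h = e / 2"
  define s1 where "s1 = t + h"
  have hpos: "h > 0" using epos by (simp add: h_def)
  have s1: "\<bar>s1 - t\<bar> < e" using epos by (simp add: s1_def h_def)
  have tt: "\<bar>t - t\<bar> < e" using epos by simp
  define c where "c = P s1 / h"
  define d where "d = (Y s1 - Y t) / h"
  have lin: "P s = c * (s - t) \<and> Y s - Y t = d * (s - t)" if "\<bar>s - t\<bar> < e" for s
  proof -
    have "P s = (s - t) / h * P s1 \<and> Y s - Y t = (s - t) / h * (Y s1 - Y t)"
    proof (rule alg_collinear)
      show "(P s)^2 + (Y s - Y t)^2 = (s - t)^2" using pair[OF tt that] Pt by simp
      show "(P s1)^2 + (Y s1 - Y t)^2 = h^2" using pair[OF tt s1] Pt by (simp add: s1_def)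
      show "(P s - P s1)^2 + (Y s - Y t - (Y s1 - Y t))^2 = (s - t - h)^2"
        using pair[OF s1 that] by (simp add: s1_def power2_eq_square algebra_simps)
      show "h > 0" by fact
    qed
    then show ?thesis by (simp add: c_def d_def)
  qed
  have cd1: "c^2 + d^2 = 1"
  proof -
    have "(P s1)^2 + (Y s1 - Y t)^2 = h^2" using pair[OF tt s1] Pt by (simp add: s1_def)
    then show ?thesis using hpos by (simp add: c_def d_def power_divide field_simps)
  qed
  show ?thesis
  proof (intro exI conjI allI impI)
    show "e > 0" "e \<le> 1/8" by fact+
    show "c^2 + d^2 = 1" by fact
    fix s s' assume a: "\<bar>s - t\<bar> < e" "\<bar>s' - t\<bar> < e"
    show "snd (\<gamma> s') - snd (\<gamma> s) = d * (s' - s)"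
      using lin[OF a(1)] lin[OF a(2)] by (simp add: Y_def algebra_simps)
    have "fst (\<gamma> s') - fst (\<gamma> s) - c * (s' - s) = of_int (K s' - K s)"
      using lin[OF a(1)] lin[OF a(2)] by (simp add: X_def P_def algebra_simps)
    then show "fst (\<gamma> s') - fst (\<gamma> s) - c * (s' - s) \<in> \<int>" by simp
  qed
qed

lemma locconst_const:
  fixes F :: "real \<Rightarrow> real" and E :: "real \<Rightarrow> real"
  assumes "\<And>t. E t > 0" "\<And>t s. \<bar>s - t\<bar> < E t \<Longrightarrow> F s = F t"
  shows "F s = F 0"
proof -
  have "\<forall>x. DERIV F x :> 0"
  proof
    fix x
    have "((\<lambda>_. F x) has_field_derivative 0) (at x)" by simp
    then show "DERIV F x :> 0"
    proof (rule has_field_derivative_transform_within_open)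
      show "open (ball x (E x))" by simp
      show "x \<in> ball x (E x)" using assms(1) by simp
      fix y assume "y \<in> ball x (E x)"
      then show "F x = F y" using assms(2)[of y x] by (simp add: dist_real_def abs_minus_commute)
    qed
  qed
  then show ?thesis by (rule DERIV_isconst_all)
qed

lemma Ints_abs_lt1:
  assumes "z \<in> \<int>" "\<bar>z\<bar> < 1" shows "z = (0::real)"
proof -
  obtain n where n: "z = of_int n" using assms(1) Ints_cases by blast
  then have "-1 < real_of_int n" "real_of_int n < 1" using assms(2) by auto
  then have "-1 < n" "n < 1" by simp_all
  then have "n = 0" by simp
  then show ?thesis using n by simp
qed

lemma geodesic_form:
  assumes iso: "loc_isom_immersion \<gamma>"
  shows "\<exists>x0 y0 c d. c^2 + d^2 = 1 \<and> (\<forall>s. \<gamma> s = (frac (x0 + c * s), y0 + d * s))"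
proof -
  have "\<forall>t. \<exists>e c d. e > 0 \<and> e \<le> 1/8 \<and> c^2 + d^2 = 1 \<and> (\<forall>s s'. \<bar>s - t\<bar> < e \<longrightarrow> \<bar>s' - t\<bar> < e \<longrightarrow>
     snd (\<gamma> s') - snd (\<gamma> s) = d * (s' - s) \<and> fst (\<gamma> s') - fst (\<gamma> s) - c * (s' - s) \<in> \<int>)"
    using local_straight[OF iso] by blast
  then obtain E C D where ECD: "\<And>t. E t > 0 \<and> E t \<le> 1/8 \<and> C t^2 + D t^2 = 1 \<and> (\<forall>s s'. \<bar>s - t\<bar> < E t \<longrightarrow> \<bar>s' - t\<bar> < E t \<longrightarrow>
     snd (\<gamma> s') - snd (\<gamma> s) = D t * (s' - s) \<and> fst (\<gamma> s') - fst (\<gamma> s) - C t * (s' - s) \<in> \<int>)"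
    by metis
  define X where "X s = fst (\<gamma> s)" for s
  define Y where "Y s = snd (\<gamma> s)" for s
  have Epos: "E t > 0" for t using ECD by blast
  have loc: "\<And>s s'. \<bar>s - t\<bar> < E t \<Longrightarrow> \<bar>s' - t\<bar> < E t \<Longrightarrow>
     Y s' - Y s = D t * (s' - s) \<and> X s' - X s - C t * (s' - s) \<in> \<int>" for t
    using ECD unfolding X_def Y_def by blast
  have Cb: "\<bar>C t\<bar> \<le> 1" for t
  proof -
    have "C t^2 + D t^2 = 1" using ECD by blast
    moreover have "0 \<le> D t^2" by simp
    ultimately have "C t^2 \<le> 1" by linarith
    then show ?thesis by (simp add: abs_square_le_1)
  qed
  have CD_loc: "C s = C t \<and> D s = D t" if st: "\<bar>s - t\<bar> < E t" for s t
  proof -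
    define \<epsilon> where "\<epsilon> = min (E t - \<bar>s - t\<bar>) (E s)"
    have "E s \<le> 1/8" using ECD[of s] by blast
    moreover have "\<epsilon> \<le> E s" by (simp add: \<epsilon>_def)
    ultimately have ep2: "\<epsilon> \<le> 1/8" by linarith
    have ep1: "\<epsilon> > 0" using st Epos[of s] by (simp add: \<epsilon>_def)
    note ep = ep1 ep2
    define s' where "s' = s + \<epsilon>/2"
    have "\<epsilon> \<le> E t - \<bar>s - t\<bar>" by (simp add: \<epsilon>_def)
    moreover have "\<bar>s' - t\<bar> \<le> \<bar>s - t\<bar> + \<bar>\<epsilon>/2\<bar>" unfolding s'_def
      using abs_triangle_ineq[of "s - t" "\<epsilon>/2"] by (simp add: algebra_simps)
    ultimately have a1: "\<bar>s' - t\<bar> < E t" using ep1 by simp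
    have a2: "\<bar>s' - s\<bar> < E s" using ep Epos[of s] by (simp add: s'_def \<epsilon>_def)
    have a3: "\<bar>s - s\<bar> < E s" using Epos[of s] by simp
    have ne: "s' - s = \<epsilon>/2" "\<epsilon>/2 \<noteq> 0" using ep by (auto simp: s'_def)
    have y1: "Y s' - Y s = D t * (s' - s)" and x1: "X s' - X s - C t * (s' - s) \<in> \<int>"
      using loc[OF st a1] by auto
    have y2: "Y s' - Y s = D s * (s' - s)" and x2: "X s' - X s - C s * (s' - s) \<in> \<int>"
      using loc[OF a3 a2] by auto
    have "D s = D t" using y1 y2 ne by simp
    have z: "(C s - C t) * (\<epsilon>/2) \<in> \<int>"
    proof -
      have "(X s' - X s - C t * (s' - s)) - (X s' - X s - C s * (s' - s)) \<in> \<int>" using x1 x2 by (rule Ints_diff)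
      moreover have "(X s' - X s - C t * (s' - s)) - (X s' - X s - C s * (s' - s)) = (C s - C t) * (s' - s)"
        by (simp add: algebra_simps)
      ultimately show ?thesis unfolding ne(1) by metis
    qed
    have "\<bar>(C s - C t) * (\<epsilon>/2)\<bar> \<le> 2 * (1/16)"
    proof -
      have "\<bar>C s - C t\<bar> \<le> 2" using Cb[of s] Cb[of t] by linarith
      moreover have "\<bar>\<epsilon>\<bar> \<le> 1/8" using ep by simp
      ultimately have "\<bar>\<epsilon>\<bar> * \<bar>C s - C t\<bar> \<le> 1/8 * 2" by (intro mult_mono) auto
      then show ?thesis by (simp add: abs_mult)
    qed
    then have "(C s - C t) * (\<epsilon>/2) = 0" using z Ints_abs_lt1 by fastforce
    then have "C s = C t" using ne by simp
    with \<open>D s = D t\<close> show ?thesis by simp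
  qed
  have Cc: "C s = C 0" for s by (rule locconst_const[of E C]) (use Epos CD_loc in auto)
  have Dc: "D s = D 0" for s by (rule locconst_const[of E D]) (use Epos CD_loc in auto)
  define c where "c = C 0"
  define d where "d = D 0"
  have Yl: "Y s - d * s = Y 0 - d * 0" for s
  proof (rule locconst_const[of E "\<lambda>s. Y s - d * s"])
    show "E t > 0" for t by (rule Epos)
    fix t s assume st: "\<bar>s - t\<bar> < E t"
    have "Y s - Y t = D t * (s - t)" using loc[OF _ st, of t] Epos[of t] by simp
    then show "Y s - d * s = Y t - d * t" using Dc[of t] by (simp add: d_def algebra_simps)
  qed
  have Xl: "frac (X s - c * s) = frac (X 0 - c * 0)" for s
  proof (rule locconst_const[of E "\<lambda>s. frac (X s - c * s)"])
    show "E t > 0" for t by (rule Epos)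
    fix t s assume st: "\<bar>s - t\<bar> < E t"
    have "X s - X t - C t * (s - t) \<in> \<int>" using loc[OF _ st, of t] Epos[of t] by simp
    then have "(X s - c * s) - (X t - c * t) \<in> \<int>" using Cc[of t] by (simp add: c_def algebra_simps)
    then show "frac (X s - c * s) = frac (X t - c * t)" by (simp add: frac_eq_iff_Ints)
  qed
  have rng: "0 \<le> X s \<and> X s < 1" for s
    using iso unfolding loc_isom_immersion_def cyl_def X_def by auto
  show ?thesis
  proof (intro exI conjI allI)
    show "c^2 + d^2 = 1" using ECD[of 0] by (simp add: c_def d_def)
    fix s
    have "(X s - c * s) - X 0 \<in> \<int>" using Xl[of s] frac_eq_iff_Ints[of "X s - c * s" "X 0"] by simp
    then have "X s - (X 0 + c * s) \<in> \<int>" by (simp add: algebra_simps)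
    then have "frac (X s) = frac (X 0 + c * s)" by (simp add: frac_eq_iff_Ints)
    then have "X s = frac (X 0 + c * s)" using rng[of s] frac_eq[of "X s"] by simp
    moreover have "Y s = Y 0 + d * s" using Yl[of s] by simp
    ultimately show "\<gamma> s = (frac (X 0 + c * s), Y 0 + d * s)" by (simp add: X_def Y_def prod_eq_iff)
  qed
qed

lemma geodesic_hts:
  assumes g: "cyl_geodesic G" and th: "0 \<le> \<theta>" "\<theta> < 1"
  shows "{y. (\<theta>, y) \<in> G} = {} \<or> {y. (\<theta>, y) \<in> G} = UNIV \<or> (\<exists>a. {y. (\<theta>, y) \<in> G} = {a})
         \<or> (\<exists>a r. r \<noteq> 0 \<and> {y. (\<theta>, y) \<in> G} = AP a r)"
proof -
  obtain \<gamma> where iso: "loc_isom_immersion \<gamma>" and G: "G = range \<gamma>" using g unfolding cyl_geodesic_def by blast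
  obtain x0 y0 c d where cd: "c^2 + d^2 = 1" and f: "\<And>s. \<gamma> s = (frac (x0 + c * s), y0 + d * s)"
    using geodesic_form[OF iso] by blast
  have HG: "{y. (\<theta>, y) \<in> G} = {y. \<exists>s. x0 + c * s - \<theta> \<in> \<int> \<and> y = y0 + d * s}"
    unfolding G using f frac_eq_theta[OF th] by (auto simp: image_iff) metis+
  show ?thesis
  proof (cases "c = 0")
    case True
    then have d: "d \<noteq> 0" using cd by auto
    show ?thesis
    proof (cases "x0 - \<theta> \<in> \<int>")
      case True
      have "{y. (\<theta>, y) \<in> G} = UNIV"
      proof (unfold HG, safe)
        fix y
        show "\<exists>s. x0 + c * s - \<theta> \<in> \<int> \<and> y = y0 + d * s"
          by (rule exI[of _ "(y - y0) / d"]) (use True \<open>c = 0\<close> d in simp)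
      qed simp
      then show ?thesis by blast
    next
      case False
      then have "{y. (\<theta>, y) \<in> G} = {}" unfolding HG using \<open>c = 0\<close> by auto
      then show ?thesis by blast
    qed
  next
    case False
    have sol: "x0 + c * s - \<theta> \<in> \<int> \<longleftrightarrow> (\<exists>k::int. s = (\<theta> - x0 + of_int k) / c)" for s
    proof
      assume "x0 + c * s - \<theta> \<in> \<int>"
      then obtain k where "x0 + c * s - \<theta> = of_int k" using Ints_cases by blast
      then have "s = (\<theta> - x0 + of_int k) / c" using False by (simp add: field_simps)
      then show "\<exists>k::int. s = (\<theta> - x0 + of_int k) / c" by blast
    next
      assume "\<exists>k::int. s = (\<theta> - x0 + of_int k) / c"
      then obtain k :: int where "s = (\<theta> - x0 + of_int k) / c" by blast
      then have "x0 + c * s - \<theta> = of_int k" using False by (simp add: field_simps)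
      then show "x0 + c * s - \<theta> \<in> \<int>" by simp
    qed
    have HG2: "{y. (\<theta>, y) \<in> G} = {y. \<exists>k::int. y = y0 + d * ((\<theta> - x0 + of_int k) / c)}"
      unfolding HG sol by auto
    show ?thesis
    proof (cases "d = 0")
      case True
      then have "{y. (\<theta>, y) \<in> G} = {y0}" unfolding HG2 by auto
      then show ?thesis by blast
    next
      case dn: False
      have "{y. (\<theta>, y) \<in> G} = AP (y0 + d * (\<theta> - x0) / c) (d / c)"
        unfolding HG2 AP_def using False by (auto simp: field_simps)
      moreover have "d / c \<noteq> 0" using dn False by simp
      ultimately show ?thesis by blast
    qed
  qed
qed

lemma helix_exists:
  assumes th: "0 \<le> \<theta>" "\<theta> < 1" and r: "r > 0"
  shows "\<exists>G. cyl_geodesic G \<and> {y. (\<theta>, y) \<in> G} = AP a r"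
proof -
  define \<alpha> where "\<alpha> = 1 / sqrt (1 + r^2)"
  define \<beta> where "\<beta> = r * \<alpha>"
  have sq: "sqrt (1 + r^2) \<ge> 1" by simp
  have p1: "0 < 1 + r^2" using zero_le_power2[of r] by linarith
  have apos: "\<alpha> > 0" using p1 by (simp add: \<alpha>_def)
  have "1 / sqrt (1 + r^2) \<le> 1 / 1" by (rule divide_left_mono) (use sq p1 in auto)
  then have ale: "\<alpha> \<le> 1" by (simp add: \<alpha>_def)
  have ab: "\<alpha>^2 + \<beta>^2 = 1"
  proof -
    have "\<alpha>^2 = 1 / (1 + r^2)" by (simp add: \<alpha>_def power_divide add_nonneg_nonneg)
    then show ?thesis using p1 by (simp add: \<beta>_def power_mult_distrib add_divide_distrib[symmetric])
  qed
  define \<gamma> where "\<gamma> s = (frac (\<theta> + \<alpha> * s), a + \<beta> * s)" for s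
  have iso: "loc_isom_immersion \<gamma>"
    unfolding loc_isom_immersion_def
  proof (intro conjI allI)
    show "range \<gamma> \<subseteq> cyl" by (auto simp: \<gamma>_def cyl_def frac_lt_1)
    fix t
    show "\<exists>e>0. \<forall>s\<in>{t - e<..<t + e}. \<forall>s'\<in>{t - e<..<t + e}. cyl_dist (\<gamma> s) (\<gamma> s') = \<bar>s - s'\<bar>"
    proof (intro exI[of _ "1/4"] conjI ballI)
      fix s s' assume "s \<in> {t - 1/4<..<t + 1/4}" "s' \<in> {t - 1/4<..<t + 1/4}"
      then have ss: "\<bar>s - s'\<bar> < 1/2" by (subst abs_less_iff) auto
      define u where "u = \<theta> + \<alpha> * s"
      define w where "w = \<theta> + \<alpha> * s'"
      have e1: "frac u - frac w - of_int (\<lfloor>w\<rfloor> - \<lfloor>u\<rfloor>) = \<alpha> * (s - s')"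
        by (simp add: frac_def u_def w_def algebra_simps)
      have "\<bar>\<alpha> * (s - s')\<bar> \<le> 1 * \<bar>s - s'\<bar>" unfolding abs_mult using apos ale
        by (intro mult_right_mono) auto
      then have "\<bar>\<alpha> * (s - s')\<bar> \<le> 1/2" using ss by simp
      then have "circ_dist (frac u) (frac w) = \<bar>\<alpha> * (s - s')\<bar>" using circ_dist_eq e1 by metis
      then have "cyl_dist (\<gamma> s) (\<gamma> s') = sqrt ((\<alpha> * (s - s'))^2 + (\<beta> * (s - s'))^2)"
        by (simp add: cyl_dist_def \<gamma>_def u_def w_def algebra_simps)
      also have "(\<alpha> * (s - s'))^2 + (\<beta> * (s - s'))^2 = (\<alpha>^2 + \<beta>^2) * (s - s')^2"
        by (simp add: power2_eq_square algebra_simps)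
      finally show "cyl_dist (\<gamma> s) (\<gamma> s') = \<bar>s - s'\<bar>" using ab by simp
    qed simp
  qed
  have "{y. (\<theta>, y) \<in> range \<gamma>} = AP a r"
  proof (rule set_eqI, rule iffI)
    fix y assume "y \<in> {y. (\<theta>, y) \<in> range \<gamma>}"
    then have "(\<theta>, y) \<in> range \<gamma>" by simp
    then obtain s where s: "frac (\<theta> + \<alpha> * s) = \<theta>" "y = a + \<beta> * s" by (auto simp: \<gamma>_def image_iff prod_eq_iff) (metis fst_conv snd_conv)
    then have "\<alpha> * s \<in> \<int>" using frac_eq_theta[OF th] by simp
    then obtain k where k: "\<alpha> * s = of_int k" using Ints_cases by blast
    have "y = a + of_int k * r" using s(2) k by (simp add: \<beta>_def algebra_simps)
    then show "y \<in> AP a r" by (auto simp: AP_iff)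
  next
    fix y assume "y \<in> AP a r"
    then obtain k :: int where k: "y = a + of_int k * r" by (auto simp: AP_iff)
    define s where "s = of_int k / \<alpha>"
    have "\<alpha> * s = of_int k" using apos by (simp add: s_def)
    then have "frac (\<theta> + \<alpha> * s) = \<theta>" using frac_eq_theta[OF th] by simp
    moreover have "y = a + \<beta> * s" using \<open>\<alpha> * s = of_int k\<close> k by (simp add: \<beta>_def algebra_simps)
    ultimately have "\<gamma> s = (\<theta>, y)" by (simp add: \<gamma>_def)
    then show "y \<in> {y. (\<theta>, y) \<in> range \<gamma>}" by (metis rangeI mem_Collect_eq)
  qed
  moreover have "cyl_geodesic (range \<gamma>)" using iso unfolding cyl_geodesic_def by blast
  ultimately show ?thesis by blast
qed

theorem lemma4p4:
  fixes f :: "real \<times> real \<Rightarrow> real \<times> real" and \<theta>0 :: real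
  assumes "0 \<le> \<theta>0" and "\<theta>0 < 1"
    and "geodesic_preserving f"
    and "f ` ({\<theta>0} \<times> UNIV) = {\<theta>0} \<times> UNIV"
    and "f (\<theta>0, 0) = (\<theta>0, 0)"
    and "f (\<theta>0, 1) = (\<theta>0, 1)"
  shows "\<forall>(n::int) (m::nat). f (\<theta>0, real_of_int n / 2 ^ m) = (\<theta>0, real_of_int n / 2 ^ m)"
proof -
  note th = assms(1,2)
  have bij: "bij_betw f cyl cyl" and gp: "\<And>G. cyl_geodesic G \<Longrightarrow> cyl_geodesic (f ` G)"
    using assms(3) unfolding geodesic_preserving_def by auto
  have injf: "inj_on f cyl" using bij by (rule bij_betw_imp_inj_on)
  have vcyl: "{\<theta>0} \<times> UNIV \<subseteq> cyl" using th by (auto simp: cyl_def)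
  define g where "g y = snd (f (\<theta>0, y))" for y
  have fv: "f (\<theta>0, y) = (\<theta>0, g y)" for y
  proof -
    have "f (\<theta>0, y) \<in> {\<theta>0} \<times> UNIV" using assms(4) by blast
    then show ?thesis by (auto simp: g_def prod_eq_iff)
  qed
  have injg: "inj g"
  proof (rule injI)
    fix x y assume "g x = g y"
    then have "f (\<theta>0, x) = f (\<theta>0, y)" using fv by simp
    then have "(\<theta>0, x) = (\<theta>0, y)" using injf vcyl by (auto dest: inj_onD)
    then show "x = y" by simp
  qed
  have surjg: "g ` UNIV = UNIV"
  proof -
    have "y \<in> range g" for y
    proof -
      have "(\<theta>0, y) \<in> f ` ({\<theta>0} \<times> UNIV)" using assms(4) by simp
      then obtain y' where "f (\<theta>0, y') = (\<theta>0, y)" by auto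
      then show ?thesis using fv[of y'] by auto
    qed
    then show ?thesis by auto
  qed
  have hts: "{y. (\<theta>0, y) \<in> f ` G} = g ` {y. (\<theta>0, y) \<in> G}" if G: "G \<subseteq> cyl" for G
  proof (rule set_eqI, rule iffI)
    fix y assume "y \<in> {y. (\<theta>0, y) \<in> f ` G}"
    then obtain p where p: "(\<theta>0, y) = f p" "p \<in> G" by auto
    have "(\<theta>0, y) \<in> f ` ({\<theta>0} \<times> UNIV)" using assms(4) by simp
    then obtain y' where y': "f (\<theta>0, y') = (\<theta>0, y)" by auto
    have "(\<theta>0, y') \<in> cyl" using vcyl by auto
    moreover have "p \<in> cyl" using G p by auto
    ultimately have "p = (\<theta>0, y')" using injf p y' by (metis inj_onD)
    then have "y' \<in> {y. (\<theta>0, y) \<in> G}" "y = g y'" using p y' fv[of y'] by auto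
    then show "y \<in> g ` {y. (\<theta>0, y) \<in> G}" by blast
  next
    fix y assume "y \<in> g ` {y. (\<theta>0, y) \<in> G}"
    then obtain y' where "(\<theta>0, y') \<in> G" "y = g y'" by auto
    then show "y \<in> {y. (\<theta>0, y) \<in> f ` G}" using fv[of y'] by (metis imageI mem_Collect_eq)
  qed
  have apm: "\<exists>b' r'. r' \<noteq> 0 \<and> g ` AP b r = AP b' r'" if r: "r \<noteq> 0" for b r
  proof -
    have APabs: "AP b r = AP b \<bar>r\<bar>"
    proof (cases "r \<ge> 0")
      case False
      have ar: "\<bar>r\<bar> = - r" using False by simp
      show ?thesis
      proof (rule set_eqI)
        fix x
        have "(\<exists>k::int. x = b + of_int k * r) \<longleftrightarrow> (\<exists>k::int. x = b + of_int k * (- r))"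
        proof
          assume "\<exists>k::int. x = b + of_int k * r"
          then obtain k :: int where "x = b + of_int k * r" by blast
          then have "x = b + of_int (- k) * (- r)" by simp
          then show "\<exists>k::int. x = b + of_int k * (- r)" by blast
        next
          assume "\<exists>k::int. x = b + of_int k * (- r)"
          then obtain k :: int where "x = b + of_int k * (- r)" by blast
          then have "x = b + of_int (- k) * r" by simp
          then show "\<exists>k::int. x = b + of_int k * r" by blast
        qed
        then show "x \<in> AP b r \<longleftrightarrow> x \<in> AP b \<bar>r\<bar>" unfolding AP_iff ar .
      qed
    qed simp
    obtain G where G: "cyl_geodesic G" "{y. (\<theta>0, y) \<in> G} = AP b r"
      using helix_exists[OF th, of "\<bar>r\<bar>" b] r APabs by auto
    have Gc: "G \<subseteq> cyl" using G(1) unfolding cyl_geodesic_def loc_isom_immersion_def by auto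
    have H: "{y. (\<theta>0, y) \<in> f ` G} = g ` AP b r" using hts[OF Gc] G(2) by simp
    have m0: "b \<in> AP b r" by (auto simp: AP_iff intro: exI[of _ 0])
    have m1: "b + r \<in> AP b r" by (auto simp: AP_iff intro: exI[of _ 1])
    have nm: "b + r / 2 \<notin> AP b r"
    proof
      assume "b + r / 2 \<in> AP b r"
      then obtain k :: int where "b + r / 2 = b + of_int k * r" by (auto simp: AP_iff)
      then have "of_int k = (1/2::real)" using r by (simp add: field_simps)
      then have "of_int (2 * k) = (1::real)" by simp
      then have "2 * k = 1" by linarith
      then show False by presburger
    qed
    from geodesic_hts[OF gp[OF G(1)] th] H
    consider "g ` AP b r = {}" | "g ` AP b r = UNIV" | a where "g ` AP b r = {a}"
      | a' r' where "r' \<noteq> 0" "g ` AP b r = AP a' r'" by auto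
    then show ?thesis
    proof cases
      case 1 then show ?thesis using m0 by auto
    next
      case 2
      then have "g ` AP b r = g ` UNIV" using surjg by simp
      then have "AP b r = UNIV" using injg by (simp add: inj_image_eq_iff)
      then show ?thesis using nm by auto
    next
      case (3 a)
      then have "g b \<in> {a}" "g (b + r) \<in> {a}" using m0 m1 by (metis imageI)+
      then have "g b = g (b + r)" by simp
      then show ?thesis using injg r by (auto dest: injD)
    next
      case 4 then show ?thesis by blast
    qed
  qed
  have g0: "g 0 = 0" using assms(5) fv[of 0] by simp
  have g1: "g 1 = 1" using assms(6) fv[of 1] by simp
  show ?thesis
  proof (intro allI)
    fix n :: int and m :: nat
    have "g (of_int n / 2^m) = of_int n / 2^m" by (rule dyadic_fixed[OF injg apm g0 g1])
    then show "f (\<theta>0, real_of_int n / 2 ^ m) = (\<theta>0, real_of_int n / 2 ^ m)" using fv by simp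
  qed
qed

end
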